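(* Let $\alpha\in(0,\infty)$ and let $X_1,X_2,\ldots$ be i.i.d. random variables with $\Pr(X_i=0)=\Pr(X_i=\alpha)=1/2$. Let $\mu_\alpha$ be the distribution of the random continued fraction $[1,X_1,1,X_2,1,X_3,\ldots]$. If $\mu_\alpha$ is absolutely continuous with respect to Lebesgue measure with a density belonging to $L^p$ for every $p<\infty$, then $\alpha\le(3\sqrt2-4)/2$. In particular, this conclusion holds if $\mu_\alpha$ has a density in $L^\infty$.
   Context: The continued fraction $[1,x_1,1,x_2,\ldots]=\cfrac{1}{1+\cfrac{1}{x_1+\cfrac{1}{1+\cfrac{1}{x_2+\cdots}}}}$ is defined as $\lim_{n\to\infty}T_{x_1}\circ\cdots\circ T_{x_n}(0)$ with $T_a(x):=\frac{x+a}{1+x+a}$; the limit exists by monotonicity in each $x_i$. The measure $\mu_\alpha$ is supported on a bounded interval $[0,M_\alpha]$. *)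

theory Defs
  imports "HOL-Probability.Probability"
begin

definition cfT :: "real \<Rightarrow> real \<Rightarrow> real" where
  "cfT a x = (x + a) / (1 + x + a)"

text \<open>The continued fraction [1, x_1, 1, x_2, ...] with x_(i+1) = xs i, defined as
  the limit of T_(x_1) o ... o T_(x_n) (0) as n tends to infinity.\<close>
definition rcf :: "(nat \<Rightarrow> real) \<Rightarrow> real" where
  "rcf xs = lim (\<lambda>n. foldr (\<lambda>i acc. cfT (xs i) acc) [0..<n] 0)"

definition coins :: "(nat \<Rightarrow> bool) measure" where
  "coins = PiM UNIV (\<lambda>_. measure_pmf (bernoulli_pmf (1/2)))"

text \<open>X_(i+1)(w) = alpha if coin i is heads, 0 otherwise; so P(X=0)=P(X=alpha)=1/2, i.i.d.\<close>
definition Xcoin :: "real \<Rightarrow> nat \<Rightarrow> (nat \<Rightarrow> bool) \<Rightarrow> real" where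
  "Xcoin \<alpha> i \<omega> = (if \<omega> i then \<alpha> else 0)"

definition mu :: "real \<Rightarrow> real measure" where
  "mu \<alpha> = distr coins lborel (\<lambda>\<omega>. rcf (\<lambda>i. Xcoin \<alpha> i \<omega>))"

definition has_density :: "real measure \<Rightarrow> (real \<Rightarrow> real) \<Rightarrow> bool" where
  "has_density M f \<longleftrightarrow> f \<in> borel_measurable lborel \<and> (\<forall>x. 0 \<le> f x)
     \<and> M = density lborel (\<lambda>x. ennreal (f x))"

end

theory Submission
  imports Defs
begin


definition G :: "(nat \<Rightarrow> real) \<Rightarrow> nat \<Rightarrow> real \<Rightarrow> real" where
  "G xs n y = foldr (\<lambda>i acc. cfT (xs i) acc) [0..<n] y"

lemma G_0[simp]: "G xs 0 y = y" by (simp add: G_def)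
lemma G_Suc: "G xs (Suc n) y = G xs n (cfT (xs n) y)"
  by (simp add: G_def)

lemma Xcoin_meas[measurable]: "(\<lambda>\<omega>. Xcoin \<alpha> i \<omega>) \<in> borel_measurable coins"
proof -
  have "(\<lambda>\<omega>::nat\<Rightarrow>bool. \<omega> i) \<in> measurable coins (count_space UNIV)"
    unfolding coins_def
    using measurable_component_singleton[of i UNIV "\<lambda>_. measure_pmf (bernoulli_pmf (1/2))"]
    by simp
  moreover have "(\<lambda>b::bool. if b then \<alpha> else 0) \<in> borel_measurable (count_space UNIV)" by simp
  ultimately have "(\<lambda>b::bool. if b then \<alpha> else 0) \<circ> (\<lambda>\<omega>::nat\<Rightarrow>bool. \<omega> i) \<in> borel_measurable coins"
    by (rule measurable_comp)
  then show ?thesis unfolding Xcoin_def comp_def .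
qed

lemma cfT_meas[measurable]:
  "f \<in> borel_measurable M \<Longrightarrow> g \<in> borel_measurable M \<Longrightarrow> (\<lambda>x. cfT (f x) (g x)) \<in> borel_measurable M"
  unfolding cfT_def by (intro borel_measurable_divide borel_measurable_add) auto

lemma G_meas: "h \<in> borel_measurable coins \<Longrightarrow> (\<lambda>\<omega>. G (\<lambda>i. Xcoin \<alpha> i \<omega>) n (h \<omega>)) \<in> borel_measurable coins"
proof (induction n arbitrary: h)
  case 0 then show ?case by simp
next
  case (Suc n)
  have "(\<lambda>\<omega>. cfT (Xcoin \<alpha> n \<omega>) (h \<omega>)) \<in> borel_measurable coins" using Suc.prems by measurable
  from Suc.IH[OF this] show ?case by (simp add: G_Suc)
qed

interpretation coinsP: product_prob_space "\<lambda>_. measure_pmf (bernoulli_pmf (1/2))" UNIV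
  by (simp add: product_prob_space_def product_sigma_finite_def prob_space_measure_pmf
      product_prob_space_axioms_def prob_space_imp_sigma_finite)

lemma coins_prefix: "emeasure coins {\<omega>\<in>space coins. \<forall>i\<in>{..<n}. \<omega> i \<in> {True}} = ennreal ((1/2)^n)"
  unfolding coins_def
  apply (subst coinsP.emeasure_PiM_Collect)
  apply (auto simp: emeasure_pmf_single)
  apply (subst ennreal_power[symmetric]) apply (auto simp: ennreal_half)
  done

definition M0 :: "real \<Rightarrow> real" where "M0 a = (sqrt (a^2 + 4*a) - a) / 2"

lemma M0_pos: "0 < a \<Longrightarrow> 0 < M0 a"
proof -
  assume a: "0 < a"
  have "a < sqrt (a^2+4*a)" by (rule real_less_rsqrt) (use a in simp)
  then show ?thesis unfolding M0_def by simp
qed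

lemma M0_fix: "0 < a \<Longrightarrow> (M0 a)^2 + a * M0 a = a"
proof -
  assume a: "0 < a"
  define S where "S = sqrt (a^2 + 4*a)"
  have S2: "S^2 = a^2 + 4*a" unfolding S_def using a by simp
  have "(M0 a)^2 + a * M0 a = (S^2 - a^2)/4" unfolding M0_def S_def[symmetric]
    by (simp add: power2_eq_square field_simps)
  then show ?thesis using S2 by simp
qed

lemma cfT_nonneg: "0 \<le> a \<Longrightarrow> 0 \<le> x \<Longrightarrow> 0 \<le> cfT a x"
  unfolding cfT_def by simp

lemma cfT_diff: "0 \<le> a \<Longrightarrow> 0 \<le> x \<Longrightarrow> 0 \<le> y \<Longrightarrow>
   cfT a y - cfT a x = (y - x) / ((1 + x + a) * (1 + y + a))"
  unfolding cfT_def by (simp add: field_simps)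

lemma cfT_mono: "0 \<le> a \<Longrightarrow> 0 \<le> x \<Longrightarrow> x \<le> y \<Longrightarrow> cfT a x \<le> cfT a y"
proof -
  assume as: "0 \<le> a" "0 \<le> x" "x \<le> y"
  have "0 \<le> (y-x)/((1+x+a)*(1+y+a))" by (intro divide_nonneg_pos mult_pos_pos) (use as in auto)
  then show ?thesis using cfT_diff[of a x y] as by linarith
qed

lemma cfT_fix: "0 < a \<Longrightarrow> cfT a (M0 a) = M0 a"
proof -
  assume a: "0 < a"
  have p: "0 < M0 a" using M0_pos[OF a] .
  have "M0 a * (1 + M0 a + a) = M0 a + a" using M0_fix[OF a] by (simp add: power2_eq_square algebra_simps)
  then show ?thesis unfolding cfT_def using p a by (simp add: field_simps)
qed

lemma cfT0_le: "0 \<le> x \<Longrightarrow> cfT 0 x \<le> x"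
  unfolding cfT_def by (simp add: field_simps)

lemma G_mono: "(\<And>i. 0 \<le> xs i) \<Longrightarrow> 0 \<le> y \<Longrightarrow> y \<le> z \<Longrightarrow> 0 \<le> G xs n y \<and> G xs n y \<le> G xs n z"
proof (induction n arbitrary: y z)
  case 0 then show ?case by simp
next
  case (Suc n)
  have "0 \<le> cfT (xs n) y" "cfT (xs n) y \<le> cfT (xs n) z"
    using Suc.prems cfT_nonneg cfT_mono by auto
  from Suc.IH[OF Suc.prems(1) this] show ?case by (simp add: G_Suc)
qed

lemma G_bound: "0 < a \<Longrightarrow> (\<And>i. xs i = 0 \<or> xs i = a) \<Longrightarrow> 0 \<le> y \<Longrightarrow> y \<le> M0 a \<Longrightarrow> G xs n y \<le> M0 a"
proof (induction n arbitrary: y)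
  case 0 then show ?case by simp
next
  case (Suc n)
  have xn: "xs n = 0 \<or> xs n = a" using Suc.prems(2)[of n] .
  have "0 \<le> xs n" using xn Suc.prems(1) by auto
  then have "0 \<le> cfT (xs n) y" using Suc.prems(3) by (rule cfT_nonneg)
  moreover have "cfT (xs n) y \<le> M0 a"
  proof (cases "xs n = 0")
    case True then show ?thesis using cfT0_le[of y] Suc.prems by simp
  next
    case False then have "xs n = a" using xn by auto
    then show ?thesis using cfT_mono[of a y "M0 a"] cfT_fix[of a] Suc.prems by simp
  qed
  ultimately show ?case using Suc.IH[of "cfT (xs n) y"] Suc.prems by (simp add: G_Suc)
qed

lemma G_cong: "(\<And>i. i < n \<Longrightarrow> xs i = ys i) \<Longrightarrow> G xs n y = G ys n y"
  unfolding G_def by (intro foldr_cong) auto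

lemma G_const: "G (\<lambda>_. a) n y = (cfT a ^^ n) y"
  by (induction n arbitrary: y) (simp_all add: G_Suc funpow_swap1)

lemma G_inc: "(\<And>i. 0 \<le> xs i) \<Longrightarrow> G xs n 0 \<le> G xs (Suc n) 0"
  using G_mono[of xs 0 "cfT (xs n) 0" n] cfT_nonneg[of "xs n" 0] by (simp add: G_Suc)

lemma rcf_props:
  assumes a: "0 < a" and xs: "\<And>i. xs i = 0 \<or> xs i = a"
  shows "(\<lambda>n. G xs n 0) \<longlonglongrightarrow> rcf xs" "\<And>n. G xs n 0 \<le> rcf xs" "rcf xs \<le> M0 a"
proof -
  have nn: "\<And>i. 0 \<le> xs i" proof - fix i show "0 \<le> xs i" using xs[of i] a by auto qed
  have inc: "incseq (\<lambda>n. G xs n 0)" by (rule incseq_SucI) (use G_inc[OF nn] in auto)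
  have bd: "\<forall>n. G xs n 0 \<le> M0 a" using G_bound[OF a xs, of 0] M0_pos[OF a] by simp
  obtain L where L: "(\<lambda>n. G xs n 0) \<longlonglongrightarrow> L" "\<forall>n. G xs n 0 \<le> L"
    using incseq_convergent[OF inc bd] by blast
  have "rcf xs = L" unfolding rcf_def G_def[symmetric] using L(1) by (rule limI)
  then show "(\<lambda>n. G xs n 0) \<longlonglongrightarrow> rcf xs" "\<And>n. G xs n 0 \<le> rcf xs" using L by auto
  have "L \<le> M0 a" by (rule LIMSEQ_le_const2[OF L(1)]) (use bd in auto)
  then show "rcf xs \<le> M0 a" using \<open>rcf xs = L\<close> by simp
qed

lemma Xcoin_vals: "Xcoin a i \<omega> = 0 \<or> Xcoin a i \<omega> = a" unfolding Xcoin_def by auto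

lemma rcf_Xcoin:
  assumes a: "0 < a"
  shows "(\<lambda>n. G (\<lambda>i. Xcoin a i \<omega>) n 0) \<longlonglongrightarrow> rcf (\<lambda>i. Xcoin a i \<omega>)"
   "\<And>n. G (\<lambda>i. Xcoin a i \<omega>) n 0 \<le> rcf (\<lambda>i. Xcoin a i \<omega>)"
   "rcf (\<lambda>i. Xcoin a i \<omega>) \<le> M0 a"
  by (rule rcf_props[OF a]; rule Xcoin_vals)+

lemma rcf_meas: "0 < a \<Longrightarrow> (\<lambda>\<omega>. rcf (\<lambda>i. Xcoin a i \<omega>)) \<in> borel_measurable coins"
  apply (rule borel_measurable_LIMSEQ_metric[where f="\<lambda>n \<omega>. G (\<lambda>i. Xcoin a i \<omega>) n 0"])
   apply (rule G_meas)
   apply simp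
  apply (rule rcf_Xcoin(1))
  apply assumption
  done

lemma mass_bound:
  assumes a: "0 < a"
  shows "ennreal ((1/2)^n) \<le> emeasure (mu a) {(cfT a ^^ n) 0 .. M0 a}"
proof -
  let ?R = "\<lambda>\<omega>. rcf (\<lambda>i. Xcoin a i \<omega>)"
  let ?I = "{(cfT a ^^ n) 0 .. M0 a}"
  have eq: "emeasure (mu a) ?I = emeasure coins (?R -` ?I \<inter> space coins)"
    unfolding mu_def by (rule emeasure_distr) (auto intro: rcf_meas[OF a])
  have sub: "{\<omega>\<in>space coins. \<forall>i\<in>{..<n}. \<omega> i \<in> {True}} \<subseteq> ?R -` ?I \<inter> space coins"
  proof
    fix \<omega> assume "\<omega> \<in> {\<omega>\<in>space coins. \<forall>i\<in>{..<n}. \<omega> i \<in> {True}}"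
    then have w: "\<omega> \<in> space coins" "\<And>i. i < n \<Longrightarrow> \<omega> i" by auto
    have "G (\<lambda>i. Xcoin a i \<omega>) n 0 = G (\<lambda>_. a) n 0"
      by (rule G_cong) (use w in \<open>auto simp: Xcoin_def\<close>)
    then have "(cfT a ^^ n) 0 \<le> ?R \<omega>"
      using rcf_Xcoin(2)[OF a, of \<omega> n] by (simp add: G_const)
    then show "\<omega> \<in> ?R -` ?I \<inter> space coins"
      using rcf_Xcoin(3)[OF a, of \<omega>] w(1) by simp
  qed
  have sets: "?R -` ?I \<inter> space coins \<in> sets coins"
    by (rule measurable_sets[OF rcf_meas[OF a]]) simp
  have "ennreal ((1/2)^n) = emeasure coins {\<omega>\<in>space coins. \<forall>i\<in>{..<n}. \<omega> i \<in> {True}}"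
    by (rule coins_prefix[symmetric])
  also have "\<dots> \<le> emeasure coins (?R -` ?I \<inter> space coins)"
    by (rule emeasure_mono[OF sub sets])
  finally show ?thesis using eq by simp
qed



definition xseq :: "real \<Rightarrow> nat \<Rightarrow> real" where "xseq a n = (cfT a ^^ n) 0"
definition Lseq :: "real \<Rightarrow> nat \<Rightarrow> real" where "Lseq a n = M0 a - xseq a n"

lemma xseq_Suc: "xseq a (Suc n) = cfT a (xseq a n)"
  unfolding xseq_def by simp

lemma xseq_props:
  assumes a: "0 < a"
  shows "0 \<le> xseq a n \<and> xseq a n < M0 a \<and> xseq a n \<le> xseq a (Suc n)"
proof (induction n)
  case 0
  have "0 \<le> cfT a 0" using a by (intro cfT_nonneg) auto
  then show ?case using M0_pos[OF a] by (simp add: xseq_def)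
next
  case (Suc n)
  have nn: "0 \<le> xseq a (Suc n)" unfolding xseq_Suc using Suc a by (intro cfT_nonneg) auto
  have "M0 a - cfT a (xseq a n) = cfT a (M0 a) - cfT a (xseq a n)" using cfT_fix[OF a] by simp
  also have "\<dots> = (M0 a - xseq a n) / ((1 + xseq a n + a) * (1 + M0 a + a))"
    using cfT_diff[of a "xseq a n" "M0 a"] Suc a M0_pos[OF a] by simp
  also have "\<dots> > 0" using Suc a M0_pos[OF a] by (intro divide_pos_pos mult_pos_pos) auto
  finally have lt: "xseq a (Suc n) < M0 a" unfolding xseq_Suc by simp
  have h: "cfT a (xseq a n) \<le> cfT a (xseq a (Suc n))" using Suc a by (intro cfT_mono) auto
  have e1: "xseq a (Suc (Suc n)) = cfT a (xseq a (Suc n))" by (rule xseq_Suc)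
  have e2: "xseq a (Suc n) = cfT a (xseq a n)" by (rule xseq_Suc)
  have "xseq a (Suc n) \<le> xseq a (Suc (Suc n))" using h e1 e2 by linarith
  then show ?case using nn lt by simp
qed

lemma xseq_mono: "0 < a \<Longrightarrow> n \<le> m \<Longrightarrow> xseq a n \<le> xseq a m"
  using incseq_SucI[of "xseq a"] xseq_props unfolding incseq_def by blast

lemma Lseq_step: "0 < a \<Longrightarrow> Lseq a (Suc n) = Lseq a n / ((1 + xseq a n + a) * (1 + M0 a + a))"
proof -
  assume a: "0 < a"
  have "Lseq a (Suc n) = cfT a (M0 a) - cfT a (xseq a n)" unfolding Lseq_def xseq_Suc using cfT_fix[OF a] by simp
  also have "\<dots> = (M0 a - xseq a n) / ((1 + xseq a n + a) * (1 + M0 a + a))"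
    using cfT_diff[of a "xseq a n" "M0 a"] xseq_props[OF a, of n] a M0_pos[OF a] by simp
  finally show ?thesis unfolding Lseq_def .
qed

lemma Lseq_pos: "0 < a \<Longrightarrow> 0 < Lseq a n"
  using xseq_props unfolding Lseq_def by (simp add: algebra_simps)

lemma threshold:
  assumes a: "0 < a" and big: "a > (3 * sqrt 2 - 4) / 2"
  shows "1 + M0 a + a > sqrt 2"
proof -
  define s where "s = sqrt 2"
  have s2: "s * s = 2" and sp: "s > 0" unfolding s_def by simp_all
  have "2 * s * a > s * (3 * s - 4)" using big sp unfolding s_def[symmetric] by simp
  then have k: "4 * s * a > 12 - 8 * s" using s2 by (simp add: algebra_simps)
  have "(2 * s - 2 - a)^2 < a^2 + 4 * a"
    using k s2 by (simp add: power2_eq_square algebra_simps)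
  then have "2 * s - 2 - a < sqrt (a^2 + 4*a)" by (rule real_less_rsqrt)
  then have "s < 1 + M0 a + a" unfolding M0_def by (simp add: field_simps)
  then show ?thesis unfolding s_def .
qed

lemma decay:
  assumes a: "0 < a" and big: "a > (3 * sqrt 2 - 4) / 2"
  shows "\<exists>N \<rho>. 0 < \<rho> \<and> \<rho> < 1/2 \<and> (\<forall>m. Lseq a (N + m) \<le> Lseq a N * \<rho> ^ m)"
proof -
  define \<beta> where "\<beta> = 1 + M0 a + a"
  define s where "s = sqrt 2"
  have s2: "s * s = 2" and sp: "s > 0" unfolding s_def by simp_all
  have bs: "\<beta> > s" unfolding \<beta>_def s_def using threshold[OF a big] .
  define \<gamma> where "\<gamma> = (s + \<beta>) / 2"
  have gs: "\<gamma> > s" "\<gamma> < \<beta>" unfolding \<gamma>_def using bs by auto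
  have gb: "\<gamma> * \<beta> > 2"
  proof -
    have "\<gamma> * \<beta> > s * s" using gs bs sp by (intro mult_strict_mono) auto
    then show ?thesis using s2 by simp
  qed
  define \<rho> where "\<rho> = 1 / (\<gamma> * \<beta>)"
  have \<rho>: "0 < \<rho>" "\<rho> < 1/2" unfolding \<rho>_def using gb by (auto simp: field_simps)
  define \<epsilon> where "\<epsilon> = \<beta> - \<gamma>"
  have ep: "\<epsilon> > 0" unfolding \<epsilon>_def using gs by simp
  have M0p: "M0 a > 0" using M0_pos[OF a] .
  have b1: "\<beta> > 1" unfolding \<beta>_def using M0p a by simp
  define r where "r = 1 / ((1 + a) * \<beta>)"
  have "1 * 1 < (1 + a) * \<beta>" using a b1 by (intro mult_strict_mono) auto
  then have r: "0 \<le> r" "r < 1" unfolding r_def by auto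
  have Lr: "Lseq a n \<le> M0 a * r ^ n" for n
  proof (induction n)
    case 0 then show ?case using xseq_props[OF a, of 0] by (simp add: Lseq_def)
  next
    case (Suc n)
    have "Lseq a (Suc n) = Lseq a n / ((1 + xseq a n + a) * \<beta>)"
      using Lseq_step[OF a] unfolding \<beta>_def by simp
    also have "\<dots> \<le> Lseq a n / ((1 + a) * \<beta>)"
      using Lseq_pos[OF a, of n] xseq_props[OF a, of n] a b1
      by (intro divide_left_mono mult_right_mono mult_pos_pos) auto
    also have "\<dots> = Lseq a n * r" unfolding r_def by simp
    also have "\<dots> \<le> M0 a * r ^ n * r" using Suc r by (intro mult_right_mono) auto
    finally show ?case by (simp add: mult_ac)
  qed
  have "(\<lambda>n. r ^ n) \<longlonglongrightarrow> 0" using r by (intro LIMSEQ_realpow_zero) auto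
  then have "eventually (\<lambda>n. r ^ n < \<epsilon> / M0 a) sequentially"
    using ep M0p by (intro order_tendstoD(2)) auto
  then obtain N where N: "r ^ N < \<epsilon> / M0 a" unfolding eventually_sequentially by auto
  have LN: "Lseq a N < \<epsilon>" using Lr[of N] N M0p by (simp add: field_simps)
  have step: "Lseq a (Suc n) \<le> Lseq a n * \<rho>" if "N \<le> n" for n
  proof -
    have "xseq a n \<ge> xseq a N" using xseq_mono[OF a that] .
    then have "1 + xseq a n + a > \<gamma>" using LN unfolding Lseq_def \<epsilon>_def \<beta>_def by simp
    then have "(1 + xseq a n + a) * \<beta> \<ge> \<gamma> * \<beta>" using b1 by simp
    then have "Lseq a n / ((1 + xseq a n + a) * \<beta>) \<le> Lseq a n / (\<gamma> * \<beta>)"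
      using Lseq_pos[OF a, of n] gb by (intro divide_left_mono) auto
    then show ?thesis using Lseq_step[OF a, of n] unfolding \<beta>_def[symmetric] \<rho>_def by simp
  qed
  have "Lseq a (N + m) \<le> Lseq a N * \<rho> ^ m" for m
  proof (induction m)
    case 0 then show ?case by simp
  next
    case (Suc m)
    have "Lseq a (N + Suc m) \<le> Lseq a (N + m) * \<rho>" using step[of "N + m"] by simp
    also have "\<dots> \<le> Lseq a N * \<rho> ^ m * \<rho>" using Suc \<rho> by (intro mult_right_mono) auto
    finally show ?case by (simp add: algebra_simps)
  qed
  then show ?thesis using \<rho> by blast
qed



lemma mu_Icc_density:
  assumes a: "0 < a" and hd: "has_density (mu a) f"
  shows "ennreal ((1/2)^n) \<le> (\<integral>\<^sup>+ x. ennreal (f x) * indicator {xseq a n .. M0 a} x \<partial>lborel)"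
proof -
  have fm: "f \<in> borel_measurable lborel" and md: "mu a = density lborel (\<lambda>x. ennreal (f x))"
    using hd unfolding has_density_def by auto
  have "emeasure (mu a) {xseq a n .. M0 a} = (\<integral>\<^sup>+ x. ennreal (f x) * indicator {xseq a n .. M0 a} x \<partial>lborel)"
    unfolding md by (rule emeasure_density) (use fm in auto)
  then show ?thesis using mass_bound[OF a, of n] unfolding xseq_def by simp
qed

lemma emeasure_I: "0 < a \<Longrightarrow> emeasure lborel {xseq a n .. M0 a} = ennreal (Lseq a n)"
  using xseq_props[of a n] unfolding Lseq_def by simp

lemma Linf_bound:
  assumes a: "0 < a" and hd: "has_density (mu a) f" and C: "AE x in lborel. \<bar>f x\<bar> \<le> C"
  shows "(1/2)^n \<le> max C 0 * Lseq a n"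
proof -
  let ?I = "{xseq a n .. M0 a}"
  have "ennreal ((1/2)^n) \<le> (\<integral>\<^sup>+ x. ennreal (f x) * indicator ?I x \<partial>lborel)"
    by (rule mu_Icc_density[OF a hd])
  also have "\<dots> \<le> (\<integral>\<^sup>+ x. ennreal (max C 0) * indicator ?I x \<partial>lborel)"
  proof (rule nn_integral_mono_AE)
    show "AE x in lborel. ennreal (f x) * indicator ?I x \<le> ennreal (max C 0) * indicator ?I x"
      using C
    proof eventually_elim
      case (elim x)
      then have "ennreal (f x) \<le> ennreal (max C 0)" by (intro ennreal_leI) auto
      then show ?case by (auto simp: indicator_def)
    qed
  qed
  also have "\<dots> = ennreal (max C 0) * emeasure lborel ?I"
    by (rule nn_integral_cmult_indicator) simp
  also have "\<dots> = ennreal (max C 0 * Lseq a n)"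
    using emeasure_I[OF a, of n] Lseq_pos[OF a, of n] by (simp add: ennreal_mult)
  finally show ?thesis
    using Lseq_pos[OF a, of n] by (subst (asm) ennreal_le_iff) auto
qed

lemma pointwise_powr:
  fixes y t p :: real
  assumes y: "0 \<le> y" and t: "0 < t" and p: "1 \<le> p"
  shows "y \<le> t + t powr (1 - p) * y powr p"
proof (cases "y \<le> t")
  case True
  have "0 \<le> t powr (1 - p) * y powr p" by simp
  then show ?thesis using True by linarith
next
  case False
  then have yt: "t < y" by simp
  then have yp: "0 < y" using t by simp
  have "1 \<le> (y / t) powr (p - 1)" using yt t p by (intro ge_one_powr_ge_zero) auto
  then have "y \<le> y * (y / t) powr (p - 1)" using yp by simp
  also have "y * (y / t) powr (p - 1) = t powr (1 - p) * y powr p"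
  proof -
    have "(y / t) powr (p - 1) = y powr (p - 1) / t powr (p - 1)"
      using yp t by (simp add: powr_divide)
    moreover have "y powr p = y * y powr (p - 1)"
      using yp powr_add[of y 1 "p - 1"] by simp
    moreover have "t powr (1 - p) = 1 / t powr (p - 1)"
      using t powr_minus_divide[of t "p - 1"] by simp
    ultimately show ?thesis by simp
  qed
  finally have "y \<le> t powr (1 - p) * y powr p" .
  then show ?thesis by (rule add_increasing[rotated]) (use t in auto)
qed

lemma Lp_bound:
  assumes a: "0 < a" and hd: "has_density (mu a) f" and p: "1 \<le> p"
    and int: "integrable lborel (\<lambda>x. \<bar>f x\<bar> powr p)"
  shows "(1/2)^n \<le> (1 + (LINT x|lborel. \<bar>f x\<bar> powr p)) * Lseq a n powr (1 - 1/p)"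
proof -
  let ?I = "{xseq a n .. M0 a}"
  let ?A = "LINT x|lborel. \<bar>f x\<bar> powr p"
  define L where "L = Lseq a n"
  have L: "0 < L" unfolding L_def by (rule Lseq_pos[OF a])
  define t where "t = L powr (- 1 / p)"
  have t: "0 < t" unfolding t_def using L by simp
  have fm: "f \<in> borel_measurable lborel" and fnn: "\<And>x. 0 \<le> f x"
    using hd unfolding has_density_def by auto
  have A: "0 \<le> ?A" by (intro integral_nonneg_AE) auto
  have "ennreal ((1/2)^n) \<le> (\<integral>\<^sup>+ x. ennreal (f x) * indicator ?I x \<partial>lborel)"
    by (rule mu_Icc_density[OF a hd])
  also have "\<dots> \<le> (\<integral>\<^sup>+ x. ennreal t * indicator ?I x + ennreal (t powr (1 - p)) * ennreal (\<bar>f x\<bar> powr p) \<partial>lborel)"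
  proof (rule nn_integral_mono)
    fix x
    have "f x \<le> t + t powr (1 - p) * \<bar>f x\<bar> powr p"
      using pointwise_powr[OF fnn[of x] t p] fnn[of x] by simp
    then have "ennreal (f x) \<le> ennreal (t + t powr (1 - p) * \<bar>f x\<bar> powr p)"
      by (rule ennreal_leI)
    also have "\<dots> = ennreal t + ennreal (t powr (1 - p)) * ennreal (\<bar>f x\<bar> powr p)"
      using t by (simp add: ennreal_plus ennreal_mult)
    finally have "ennreal (f x) \<le> ennreal t + ennreal (t powr (1 - p)) * ennreal (\<bar>f x\<bar> powr p)" .
    then show "ennreal (f x) * indicator ?I x \<le> ennreal t * indicator ?I x + ennreal (t powr (1 - p)) * ennreal (\<bar>f x\<bar> powr p)"
      by (auto simp: indicator_def)
  qed
  also have "\<dots> = (\<integral>\<^sup>+ x. ennreal t * indicator ?I x \<partial>lborel) + (\<integral>\<^sup>+ x. ennreal (t powr (1 - p)) * ennreal (\<bar>f x\<bar> powr p) \<partial>lborel)"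
    by (rule nn_integral_add) (use fm in auto)
  also have "\<dots> = ennreal t * ennreal L + ennreal (t powr (1 - p)) * (\<integral>\<^sup>+ x. ennreal (\<bar>f x\<bar> powr p) \<partial>lborel)"
    using emeasure_I[OF a, of n] fm unfolding L_def
    by (subst nn_integral_cmult_indicator) (auto intro!: nn_integral_cmult)
  also have "(\<integral>\<^sup>+ x. ennreal (\<bar>f x\<bar> powr p) \<partial>lborel) = ennreal ?A"
    by (rule nn_integral_eq_integral[OF int]) auto
  also have "ennreal t * ennreal L + ennreal (t powr (1 - p)) * ennreal ?A = ennreal (t * L + t powr (1 - p) * ?A)"
    using t L A by (simp add: ennreal_mult ennreal_plus)
  finally have ineq: "(1/2)^n \<le> t * L + t powr (1 - p) * ?A"
    using t L A by (subst (asm) ennreal_le_iff) auto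
  have e1: "t * L = L powr (1 - 1/p)"
    unfolding t_def using L powr_add[of L "-1/p" 1] by (simp add: algebra_simps)
  have e2: "t powr (1 - p) = L powr (1 - 1/p)"
  proof -
    have ex: "(-1/p) * (1-p) = 1 - 1/p" using p by (simp add: field_simps)
    show ?thesis unfolding t_def powr_powr ex ..
  qed
  show ?thesis using ineq e1 e2 unfolding L_def by (simp add: algebra_simps)
qed



lemma powr_pow_swap: "0 \<le> (\<rho>::real) \<Longrightarrow> (\<rho> ^ m) powr q = (\<rho> powr q) ^ m"
  by (induction m) (simp_all add: powr_mult)

lemma final_contra:
  assumes a: "0 < a" and big: "a > (3 * sqrt 2 - 4) / 2"
    and H: "\<And>\<rho>. 0 < \<rho> \<Longrightarrow> \<rho> < 1/2 \<Longrightarrow>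
       \<exists>B q. 0 \<le> B \<and> 0 < q \<and> \<rho> powr q < 1/2 \<and> (\<forall>n. (1/2)^n \<le> B * Lseq a n powr q)"
  shows False
proof -
  obtain N \<rho> where \<rho>: "0 < \<rho>" "\<rho> < 1/2" and dec: "\<And>m. Lseq a (N + m) \<le> Lseq a N * \<rho> ^ m"
    using decay[OF a big] by blast
  obtain B q where B: "0 \<le> B" and q: "0 < q" and rq: "\<rho> powr q < 1/2"
    and bd: "\<And>n. (1/2)^n \<le> B * Lseq a n powr q"
    using H[OF \<rho>] by blast
  define \<sigma> where "\<sigma> = \<rho> powr q"
  have \<sigma>: "0 < \<sigma>" "\<sigma> < 1/2" unfolding \<sigma>_def using \<rho> rq by auto
  define K where "K = B * Lseq a N powr q"
  have K: "0 \<le> K" unfolding K_def using B by simp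
  have key: "(1/2)^N \<le> K * (2 * \<sigma>) ^ m" for m
  proof -
    have "(1/2)^(N+m) \<le> B * Lseq a (N + m) powr q" by (rule bd)
    also have "\<dots> \<le> B * (Lseq a N * \<rho> ^ m) powr q"
      using dec[of m] less_imp_le[OF Lseq_pos[OF a, of "N+m"]] q B by (intro mult_left_mono powr_mono2) auto
    also have "\<dots> = K * \<sigma> ^ m"
      unfolding K_def \<sigma>_def using Lseq_pos[OF a, of N] \<rho>
      by (simp add: powr_mult powr_pow_swap)
    finally have h: "(1/2)^(N+m) \<le> K * \<sigma> ^ m" .
    have "(1/2::real)^N = (1/2)^(N+m) * 2^m" by (simp add: power_add power_one_over)
    also have "\<dots> \<le> K * \<sigma> ^ m * 2 ^ m" using h by (intro mult_right_mono) auto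
    also have "\<dots> = K * (2 * \<sigma>) ^ m" by (simp add: power_mult_distrib)
    finally show ?thesis .
  qed
  have "(\<lambda>m. (2 * \<sigma>) ^ m) \<longlonglongrightarrow> 0" using \<sigma> by (intro LIMSEQ_realpow_zero) auto
  then have "(\<lambda>m. K * (2 * \<sigma>) ^ m) \<longlonglongrightarrow> K * 0" by (intro tendsto_mult tendsto_const)
  then have "eventually (\<lambda>m. K * (2 * \<sigma>) ^ m < (1/2)^N) sequentially"
    by (intro order_tendstoD(2)) auto
  then obtain m where "K * (2 * \<sigma>) ^ m < (1/2)^N" unfolding eventually_sequentially by auto
  with key[of m] show False by simp
qed

lemma choose_q:
  fixes \<rho> :: real
  assumes "0 < \<rho>" "\<rho> < 1/2"
  shows "\<exists>q. 0 < q \<and> q < 1 \<and> \<rho> powr q < 1/2"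
proof -
  have l2: "ln 2 > (0::real)" by simp
  have "ln \<rho> < ln (1/2)" using assms by simp
  then have lr: "- ln \<rho> > ln 2" by (simp add: ln_div)
  define d where "d = - ln \<rho>"
  have d: "d > ln 2" "d > 0" using lr less_trans[OF l2 lr] unfolding d_def by auto
  define q0 where "q0 = ln 2 / d"
  have q0: "0 < q0" "q0 < 1" unfolding q0_def using l2 d by (auto simp: divide_less_eq)
  define q where "q = (1 + q0) / 2"
  have q: "0 < q" "q < 1" "q0 < q" unfolding q_def using q0 by auto
  have "q * d > q0 * d" using q d by (intro mult_strict_right_mono) auto
  also have "q0 * d = ln 2" unfolding q0_def using d by simp
  finally have "q * ln \<rho> < - ln 2" unfolding d_def by simp
  then have "exp (q * ln \<rho>) < exp (- ln 2)" by simp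
  also have "exp (- ln 2) = (1/2::real)" by (simp add: exp_minus)
  finally have "\<rho> powr q < 1/2" using assms unfolding powr_def by simp
  then show ?thesis using q by blast
qed

theorem proposition3p2:
  fixes \<alpha> :: real
  assumes "0 < \<alpha>"
  shows "((\<exists>f. has_density (mu \<alpha>) f
             \<and> (\<forall>p::real. 1 \<le> p \<longrightarrow> integrable lborel (\<lambda>x. \<bar>f x\<bar> powr p)))
           \<longrightarrow> \<alpha> \<le> (3 * sqrt 2 - 4) / 2)
       \<and> ((\<exists>f C. has_density (mu \<alpha>) f \<and> (AE x in lborel. \<bar>f x\<bar> \<le> C))
           \<longrightarrow> \<alpha> \<le> (3 * sqrt 2 - 4) / 2)"
proof (intro conjI impI)
  assume "\<exists>f. has_density (mu \<alpha>) f \<and> (\<forall>p::real. 1 \<le> p \<longrightarrow> integrable lborel (\<lambda>x. \<bar>f x\<bar> powr p))"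
  then obtain f where hd: "has_density (mu \<alpha>) f"
    and int: "\<And>p::real. 1 \<le> p \<Longrightarrow> integrable lborel (\<lambda>x. \<bar>f x\<bar> powr p)" by blast
  show "\<alpha> \<le> (3 * sqrt 2 - 4) / 2"
  proof (rule ccontr)
    assume "\<not> \<alpha> \<le> (3 * sqrt 2 - 4) / 2"
    then have big: "\<alpha> > (3 * sqrt 2 - 4) / 2" by simp
    show False
    proof (rule final_contra[OF assms big])
      fix \<rho> :: real assume \<rho>: "0 < \<rho>" "\<rho> < 1/2"
      obtain q where q: "0 < q" "q < 1" "\<rho> powr q < 1/2" using choose_q[OF \<rho>] by blast
      define p where "p = 1 / (1 - q)"
      have p: "1 \<le> p" unfolding p_def using q by (simp add: field_simps)
      have pq: "1 - 1/p = q" unfolding p_def using q by simp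
      define B where "B = 1 + (LINT x|lborel. \<bar>f x\<bar> powr p)"
      have B: "0 \<le> B" unfolding B_def by (smt (verit) integral_nonneg_AE powr_ge_zero AE_I2)
      have "\<forall>n. (1/2)^n \<le> B * Lseq \<alpha> n powr q"
        using Lp_bound[OF assms hd p int[OF p]] unfolding B_def pq by blast
      then show "\<exists>B q. 0 \<le> B \<and> 0 < q \<and> \<rho> powr q < 1/2 \<and> (\<forall>n. (1/2)^n \<le> B * Lseq \<alpha> n powr q)"
        using B q by blast
    qed
  qed
next
  assume "\<exists>f C. has_density (mu \<alpha>) f \<and> (AE x in lborel. \<bar>f x\<bar> \<le> C)"
  then obtain f C where hd: "has_density (mu \<alpha>) f" and C: "AE x in lborel. \<bar>f x\<bar> \<le> C" by blast
  show "\<alpha> \<le> (3 * sqrt 2 - 4) / 2"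
  proof (rule ccontr)
    assume "\<not> \<alpha> \<le> (3 * sqrt 2 - 4) / 2"
    then have big: "\<alpha> > (3 * sqrt 2 - 4) / 2" by simp
    show False
    proof (rule final_contra[OF assms big])
      fix \<rho> :: real assume \<rho>: "0 < \<rho>" "\<rho> < 1/2"
      have "\<forall>n. (1/2)^n \<le> max C 0 * Lseq \<alpha> n powr 1"
      proof
        fix n
        have e: "Lseq \<alpha> n powr 1 = Lseq \<alpha> n" using Lseq_pos[OF assms, of n] by (metis less_imp_le powr_one)
        show "(1/2)^n \<le> max C 0 * Lseq \<alpha> n powr 1" unfolding e by (rule Linf_bound[OF assms hd C])
      qed
      then show "\<exists>B q. 0 \<le> B \<and> 0 < q \<and> \<rho> powr q < 1/2 \<and> (\<forall>n. (1/2)^n \<le> B * Lseq \<alpha> n powr q)"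
        using \<rho> by (intro exI[of _ "max C 0"] exI[of _ 1]) auto
    qed
  qed
qed

end
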